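(* Let $\mathcal{SB}=\langle\mathcal{L},A,\to,\text{supp}\rangle$ be an SBAF and $S$ a weakly adequate language extension. Then $Arg_w(S)=Init(S)$.
   Context: A language is a triple $\mathcal{L}=\langle L,\overline{\cdot},n\rangle$: $L$ is a nonempty set of sentences; $\overline{\cdot}$ assigns to each $s\in L$ a set $\overline{s}\subseteq L$ of sentences incompatible with $s$, and is symmetric; $n$ is a partial naming function assigning to an argument $a$ a sentence $n(a)\in L$ (if undefined, put $\overline{n(a)}:=\emptyset$), with $\overline{n(\langle\{t\},t\rangle)}=\emptyset$. An argument is a pair $a=\langle Prem(a),Conc(a)\rangle$ with $Prem(a)$ a nonempty finite subset of $L$ and $Conc(a)\in L$; $Sent(a):=Prem(a)\cup\{Conc(a)\}$, $Sent(E):=\bigcup_{a\in E}Sent(a)$. Argument $a$ attacks $b$ ($a\to b$) if $Conc(a)\in\overline{s}$ for some $s\in Sent(b)$ or $Conc(a)\in\overline{n(b)}$. An SBAF is $\langle\mathcal{L},A,\to,\text{supp}\rangle$ with $A$ a finite set of arguments. For $E\subseteq A$: $E$ defends $a\in A$ if for every $b\in A$ with $b\to a$ some element of $E$ attacks $b$; $E$ is conflict-free if no $a,b\in E$ with $a\to b$; admissible if conflict-free and defends all its elements. $S$ is compatible if no $s,t\in S$ with $s\in\overline t$. $Arg_s(S):=\{a\in A\mid Prem(a)\subseteq S\text{ and }\overline{n(a)}\cap S=\emptyset\}$; $R^S(E):=\{a\in A\mid a\in Arg_s(S)\text{ and }E\text{ defends }a\}$. For compatible $S$, $Init(S)$ is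 the largest admissible subset of $\{a\in A\mid Sent(a)\subseteq S\text{ and }\overline{n(a)}\cap S=\emptyset\}$, and $Arg_w(S)$ is the $\subseteq$-least set $E$ with $Init(S)\subseteq E$ and $R^S(E)=E$. A weakly adequate language extension is a compatible $S\subseteq Sent(A)$ such that $Sent(a)\subseteq S$ for every $a\in Arg_w(S)$. *)

theory Defs
  imports Main
begin

text \<open>Sentences have type 'a. An argument is a pair (Prem, Conc).
  The incompatibility map is inc :: 'a => 'a set (overline), the partial
  naming function is n :: 'a arg => 'a option.\<close>

type_synonym 'a arg = "'a set \<times> 'a"

definition Prem :: "'a arg \<Rightarrow> 'a set" where "Prem a = fst a"
definition Conc :: "'a arg \<Rightarrow> 'a" where "Conc a = snd a"
definition Sent :: "'a arg \<Rightarrow> 'a set" where "Sent a = Prem a \<union> {Conc a}"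
definition SentSet :: "'a arg set \<Rightarrow> 'a set" where "SentSet E = (\<Union>a\<in>E. Sent a)"

definition nbar :: "('a \<Rightarrow> 'a set) \<Rightarrow> ('a arg \<Rightarrow> 'a option) \<Rightarrow> 'a arg \<Rightarrow> 'a set" where
  "nbar inc n a = (case n a of None \<Rightarrow> {} | Some s \<Rightarrow> inc s)"

definition language :: "'a set \<Rightarrow> ('a \<Rightarrow> 'a set) \<Rightarrow> ('a arg \<Rightarrow> 'a option) \<Rightarrow> bool" where
  "language L inc n \<longleftrightarrow>
     L \<noteq> {} \<and>
     (\<forall>s\<in>L. inc s \<subseteq> L) \<and>
     (\<forall>s\<in>L. \<forall>t\<in>L. s \<in> inc t \<longleftrightarrow> t \<in> inc s) \<and>
     (\<forall>a s. n a = Some s \<longrightarrow> s \<in> L) \<and>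
     (\<forall>t. nbar inc n ({t}, t) = {})"

definition is_argument :: "'a set \<Rightarrow> 'a arg \<Rightarrow> bool" where
  "is_argument L a \<longleftrightarrow> Prem a \<noteq> {} \<and> finite (Prem a) \<and> Prem a \<subseteq> L \<and> Conc a \<in> L"

definition attacks :: "('a \<Rightarrow> 'a set) \<Rightarrow> ('a arg \<Rightarrow> 'a option) \<Rightarrow> 'a arg \<Rightarrow> 'a arg \<Rightarrow> bool" where
  "attacks inc n a b \<longleftrightarrow> (\<exists>s\<in>Sent b. Conc a \<in> inc s) \<or> Conc a \<in> nbar inc n b"

text \<open>SBAF <L, A, attack, supp>; the attack relation is determined by inc and n.\<close>
definition SBAF :: "'a set \<Rightarrow> ('a \<Rightarrow> 'a set) \<Rightarrow> ('a arg \<Rightarrow> 'a option) \<Rightarrow> 'a arg set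
     \<Rightarrow> ('a arg \<times> 'a arg) set \<Rightarrow> bool" where
  "SBAF L inc n A supp \<longleftrightarrow> language L inc n \<and> finite A \<and> (\<forall>a\<in>A. is_argument L a)
     \<and> supp \<subseteq> A \<times> A"

definition defends :: "('a \<Rightarrow> 'a set) \<Rightarrow> ('a arg \<Rightarrow> 'a option) \<Rightarrow> 'a arg set \<Rightarrow> 'a arg set \<Rightarrow> 'a arg \<Rightarrow> bool" where
  "defends inc n A E a \<longleftrightarrow> (\<forall>b\<in>A. attacks inc n b a \<longrightarrow> (\<exists>c\<in>E. attacks inc n c b))"

definition conflict_free :: "('a \<Rightarrow> 'a set) \<Rightarrow> ('a arg \<Rightarrow> 'a option) \<Rightarrow> 'a arg set \<Rightarrow> bool" where
  "conflict_free inc n E \<longleftrightarrow> (\<forall>a\<in>E. \<forall>b\<in>E. \<not> attacks inc n a b)"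

definition admissible :: "('a \<Rightarrow> 'a set) \<Rightarrow> ('a arg \<Rightarrow> 'a option) \<Rightarrow> 'a arg set \<Rightarrow> 'a arg set \<Rightarrow> bool" where
  "admissible inc n A E \<longleftrightarrow> conflict_free inc n E \<and> (\<forall>a\<in>E. defends inc n A E a)"

definition compatible :: "('a \<Rightarrow> 'a set) \<Rightarrow> 'a set \<Rightarrow> bool" where
  "compatible inc S \<longleftrightarrow> (\<forall>s\<in>S. \<forall>t\<in>S. s \<notin> inc t)"

definition Arg_s :: "('a \<Rightarrow> 'a set) \<Rightarrow> ('a arg \<Rightarrow> 'a option) \<Rightarrow> 'a arg set \<Rightarrow> 'a set \<Rightarrow> 'a arg set" where
  "Arg_s inc n A S = {a\<in>A. Prem a \<subseteq> S \<and> nbar inc n a \<inter> S = {}}"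

definition R_S :: "('a \<Rightarrow> 'a set) \<Rightarrow> ('a arg \<Rightarrow> 'a option) \<Rightarrow> 'a arg set \<Rightarrow> 'a set \<Rightarrow> 'a arg set \<Rightarrow> 'a arg set" where
  "R_S inc n A S E = {a\<in>A. a \<in> Arg_s inc n A S \<and> defends inc n A E a}"

definition Init_cands :: "('a \<Rightarrow> 'a set) \<Rightarrow> ('a arg \<Rightarrow> 'a option) \<Rightarrow> 'a arg set \<Rightarrow> 'a set \<Rightarrow> 'a arg set" where
  "Init_cands inc n A S = {a\<in>A. Sent a \<subseteq> S \<and> nbar inc n a \<inter> S = {}}"

definition Init :: "('a \<Rightarrow> 'a set) \<Rightarrow> ('a arg \<Rightarrow> 'a option) \<Rightarrow> 'a arg set \<Rightarrow> 'a set \<Rightarrow> 'a arg set" where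
  "Init inc n A S = (THE E. E \<subseteq> Init_cands inc n A S \<and> admissible inc n A E \<and>
      (\<forall>E'. E' \<subseteq> Init_cands inc n A S \<and> admissible inc n A E' \<longrightarrow> E' \<subseteq> E))"

definition Arg_w :: "('a \<Rightarrow> 'a set) \<Rightarrow> ('a arg \<Rightarrow> 'a option) \<Rightarrow> 'a arg set \<Rightarrow> 'a set \<Rightarrow> 'a arg set" where
  "Arg_w inc n A S = (THE E. Init inc n A S \<subseteq> E \<and> R_S inc n A S E = E \<and>
      (\<forall>E'. Init inc n A S \<subseteq> E' \<and> R_S inc n A S E' = E' \<longrightarrow> E \<subseteq> E'))"

definition weakly_adequate :: "('a \<Rightarrow> 'a set) \<Rightarrow> ('a arg \<Rightarrow> 'a option) \<Rightarrow> 'a arg set \<Rightarrow> 'a set \<Rightarrow> bool" where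
  "weakly_adequate inc n A S \<longleftrightarrow> compatible inc S \<and> S \<subseteq> SentSet A \<and>
      (\<forall>a\<in>Arg_w inc n A S. Sent a \<subseteq> S)"

end

theory Submission
  imports Defs
begin

lemma cands_cf:
  assumes "compatible inc S" "E \<subseteq> Init_cands inc n A S"
  shows "conflict_free inc n E"
  unfolding conflict_free_def
proof (intro ballI notI)
  fix a b assume ab: "a \<in> E" "b \<in> E" and at: "attacks inc n a b"
  have a: "Sent a \<subseteq> S" and b: "Sent b \<subseteq> S" "nbar inc n b \<inter> S = {}"
    using ab assms(2) by (auto simp: Init_cands_def)
  have ca: "Conc a \<in> S" using a by (auto simp: Sent_def)
  from at show False
  proof (unfold attacks_def, elim disjE bexE)
    fix s assume "s \<in> Sent b" "Conc a \<in> inc s"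
    then show False using assms(1) ca b unfolding compatible_def by blast
  next
    assume "Conc a \<in> nbar inc n b" then show False using ca b by blast
  qed
qed

lemma defends_mono: "E \<subseteq> E' \<Longrightarrow> defends inc n A E a \<Longrightarrow> defends inc n A E' a"
  unfolding defends_def by blast

lemma R_mono: "E \<subseteq> E' \<Longrightarrow> R_S inc n A S E \<subseteq> R_S inc n A S E'"
  unfolding R_S_def using defends_mono by blast

lemma Init_char:
  fixes n :: "'a arg \<Rightarrow> 'a option" and A :: "'a arg set"
  assumes "compatible inc S"
  defines "I0 \<equiv> \<Union>{E. E \<subseteq> Init_cands inc n A S \<and> admissible inc n A E}"
  shows "Init inc n A S = I0" "I0 \<subseteq> Init_cands inc n A S" "admissible inc n A I0"
proof -
  have sub: "I0 \<subseteq> Init_cands inc n A S" unfolding I0_def by blast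
  have adm: "admissible inc n A I0"
    unfolding admissible_def
  proof
    show "conflict_free inc n I0" using cands_cf[OF assms(1) sub] .
    show "\<forall>a\<in>I0. defends inc n A I0 a"
    proof
      fix a assume "a \<in> I0"
      then obtain E where E: "E \<subseteq> Init_cands inc n A S" "admissible inc n A E" "a \<in> E"
        unfolding I0_def by blast
      then have "defends inc n A E a" by (auto simp: admissible_def)
      moreover have "E \<subseteq> I0" using E unfolding I0_def by blast
      ultimately show "defends inc n A I0 a" using defends_mono by blast
    qed
  qed
  show "Init inc n A S = I0"
    unfolding Init_def
  proof (rule the_equality)
    show "I0 \<subseteq> Init_cands inc n A S \<and> admissible inc n A I0 \<and>
      (\<forall>E'. E' \<subseteq> Init_cands inc n A S \<and> admissible inc n A E' \<longrightarrow> E' \<subseteq> I0)"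
      using sub adm unfolding I0_def by blast
  next
    fix E assume "E \<subseteq> Init_cands inc n A S \<and> admissible inc n A E \<and>
      (\<forall>E'. E' \<subseteq> Init_cands inc n A S \<and> admissible inc n A E' \<longrightarrow> E' \<subseteq> E)"
    then have h: "E \<subseteq> Init_cands inc n A S" "admissible inc n A E"
      "\<And>E'. E' \<subseteq> Init_cands inc n A S \<Longrightarrow> admissible inc n A E' \<Longrightarrow> E' \<subseteq> E" by auto
    have "I0 \<subseteq> E" using h(3)[OF sub adm] .
    moreover have "E \<subseteq> I0" using h(1,2) unfolding I0_def by blast
    ultimately show "E = I0" by (rule antisym[rotated])
  qed
  show "I0 \<subseteq> Init_cands inc n A S" by (rule sub)
  show "admissible inc n A I0" by (rule adm)
qed

lemma Argw_char:
  assumes "compatible inc S"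
  shows "Init inc n A S \<subseteq> Arg_w inc n A S" "R_S inc n A S (Arg_w inc n A S) = Arg_w inc n A S"
proof -
  let ?I = "Init inc n A S"
  let ?R = "R_S inc n A S"
  have Isub: "?I \<subseteq> Init_cands inc n A S" and Iadm: "admissible inc n A ?I"
    using Init_char[OF assms, of n A] by auto
  have IR: "?I \<subseteq> ?R ?I"
  proof
    fix a assume a: "a \<in> ?I"
    then have "a \<in> Init_cands inc n A S" using Isub by blast
    then have "a \<in> Arg_s inc n A S"
      by (auto simp: Init_cands_def Arg_s_def Sent_def)
    moreover have "defends inc n A ?I a" using Iadm a by (auto simp: admissible_def)
    ultimately show "a \<in> ?R ?I" by (auto simp: R_S_def Arg_s_def)
  qed
  define F where "F = (\<lambda>E. ?R E \<union> ?I)"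
  have monoF: "mono F" unfolding F_def mono_def using R_mono by blast
  define W where "W = lfp F"
  have WF: "F W = W" unfolding W_def using lfp_unfold[OF monoF] by simp
  have IW: "?I \<subseteq> W" using WF unfolding F_def by blast
  have RW: "?R W = W"
  proof -
    have "?I \<subseteq> ?R W" using IR R_mono[OF IW, of inc n A S] by blast
    then show ?thesis using WF unfolding F_def by blast
  qed
  have least: "\<And>E'. ?I \<subseteq> E' \<Longrightarrow> ?R E' = E' \<Longrightarrow> W \<subseteq> E'"
  proof -
    fix E' assume "?I \<subseteq> E'" "?R E' = E'"
    then have "F E' \<subseteq> E'" unfolding F_def by blast
    then show "W \<subseteq> E'" unfolding W_def by (rule lfp_lowerbound)
  qed
  have "Arg_w inc n A S = W"
    unfolding Arg_w_def
  proof (rule the_equality)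
    show "?I \<subseteq> W \<and> ?R W = W \<and> (\<forall>E'. ?I \<subseteq> E' \<and> ?R E' = E' \<longrightarrow> W \<subseteq> E')"
      using IW RW least by simp
  next
    fix E assume "?I \<subseteq> E \<and> ?R E = E \<and> (\<forall>E'. ?I \<subseteq> E' \<and> ?R E' = E' \<longrightarrow> E \<subseteq> E')"
    then have "E \<subseteq> W" "W \<subseteq> E" using IW RW least by auto
    then show "E = W" by (rule antisym)
  qed
  then show "?I \<subseteq> Arg_w inc n A S" "?R (Arg_w inc n A S) = Arg_w inc n A S"
    using IW RW by auto
qed

theorem mainTheorem13:
  fixes L :: "'a set" and inc :: "'a \<Rightarrow> 'a set" and n :: "'a arg \<Rightarrow> 'a option"
    and A :: "'a arg set" and supp :: "('a arg \<times> 'a arg) set" and S :: "'a set"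
  assumes "SBAF L inc n A supp"
    and "weakly_adequate inc n A S"
  shows "Arg_w inc n A S = Init inc n A S"
proof -
  have comp: "compatible inc S" and adq: "\<forall>a\<in>Arg_w inc n A S. Sent a \<subseteq> S"
    using assms(2) by (auto simp: weakly_adequate_def)
  let ?W = "Arg_w inc n A S"
  have IW: "Init inc n A S \<subseteq> ?W" and RW: "R_S inc n A S ?W = ?W"
    using Argw_char[OF comp] by auto
  have Wsub: "?W \<subseteq> Init_cands inc n A S"
  proof
    fix a assume a: "a \<in> ?W"
    then have "a \<in> R_S inc n A S ?W" using RW by simp
    then show "a \<in> Init_cands inc n A S"
      using adq a by (auto simp: R_S_def Arg_s_def Init_cands_def)
  qed
  have "admissible inc n A ?W"
    unfolding admissible_def
  proof
    show "conflict_free inc n ?W" using cands_cf[OF comp Wsub] .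
    show "\<forall>a\<in>?W. defends inc n A ?W a"
    proof
      fix a assume "a \<in> ?W"
      then have "a \<in> R_S inc n A S ?W" using RW by simp
      then show "defends inc n A ?W a" by (simp add: R_S_def)
    qed
  qed
  then have "?W \<subseteq> \<Union>{E. E \<subseteq> Init_cands inc n A S \<and> admissible inc n A E}"
    using Wsub by blast
  then have "?W \<subseteq> Init inc n A S"
    using Init_char(1)[OF comp, of n A] by simp
  then show ?thesis using IW by blast
qed

end
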